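(* Let $\Gamma=\Lambda\times\Gamma_t$ be a finitely generated abelian group ($\Lambda$ free of rank $n$, $\Gamma_t$ finite), $T=\mathrm{Hom}(\Gamma,\mathbb{C}^* )$, and $X$ a finite list of nonzero elements of $\Lambda$ spanning a sublattice of finite index in $\Lambda$. For every $C\in\mathcal{C}(X)$, with $\mathcal{D}(C)=\{A\subseteq X: C\text{ is a connected component of }H_A\}$, $$\mu(T_C,C)=\sum_{A\in\mathcal{D}(C)}(-1)^{|A|}.$$
   Context: Each $\chi\in\Lambda$ gives a character $t\mapsto t(\chi)$ of $T$, with kernel $H_\chi=\{t\in T:t(\chi)=1\}$. For $A\subseteq X$, $H_A=\bigcap_{\chi\in A}H_\chi$ (with $H_\emptyset=T$). $\mathcal{C}(X)$ is the set of all connected components of all the sets $H_A$, $A\subseteq X$ (the layers), partially ordered by reverse inclusion; its minimal elements are the connected components of $T$. $\mu$ is the Möbius function of the poset $\mathcal{C}(X)$: $\mu(L,L)=1$, $\mu(L,M)=-\sum_{L\le N<M}\mu(L,N)$ for $L<M$, and $\mu(L,M)=0$ otherwise. For $C\in\mathcal{C}(X)$, $T_C$ is the connected component of $T$ containing $C$. *)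

theory Defs
  imports "HOL-Analysis.Analysis"
begin

text \<open>The free part \<Lambda> = Z^n, realised as integer sequences supported on {..<n}.\<close>
definition lat :: "nat \<Rightarrow> (nat \<Rightarrow> int) set" where
  "lat n = {v. \<forall>i\<ge>n. v i = 0}"

text \<open>T = Hom(\<Lambda> \<times> \<Gamma>_t, C^*), with \<Gamma>_t the finite abelian group given by the type 't.
  Characters are extended by 0 outside \<Gamma>; T carries the subspace topology of the
  product (pointwise) topology, i.e. the usual topology of Hom(\<Gamma>, C^*).\<close>
definition chargrp :: "nat \<Rightarrow> ((nat \<Rightarrow> int) \<times> 't::ab_group_add \<Rightarrow> complex) set" where
  "chargrp n = {t. (\<forall>x. x \<notin> lat n \<times> UNIV \<longrightarrow> t x = 0)
                  \<and> (\<forall>x\<in>lat n \<times> UNIV. t x \<noteq> 0)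
                  \<and> (\<forall>v\<in>lat n. \<forall>w\<in>lat n. \<forall>g h. t (\<lambda>i. v i + w i, g + h) = t (v, g) * t (w, h))}"

text \<open>H_A for a sub-list A of X, given by an index set I.\<close>
definition layer_H :: "nat \<Rightarrow> (nat \<Rightarrow> int) list \<Rightarrow> nat set \<Rightarrow> ((nat \<Rightarrow> int) \<times> 't::ab_group_add \<Rightarrow> complex) set" where
  "layer_H n xs I = {t \<in> chargrp n. \<forall>i\<in>I. t (xs ! i, 0) = 1}"

definition layers :: "nat \<Rightarrow> (nat \<Rightarrow> int) list \<Rightarrow> ((nat \<Rightarrow> int) \<times> 't::ab_group_add \<Rightarrow> complex) set set" where
  "layers n xs = \<Union>{components (layer_H n xs I) | I. I \<subseteq> {..<length xs}}"

definition int_span :: "(nat \<Rightarrow> int) list \<Rightarrow> (nat \<Rightarrow> int) set" where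
  "int_span xs = {v. \<exists>c::nat \<Rightarrow> int. v = (\<lambda>i. \<Sum>j<length xs. c j * (xs ! j) i)}"

definition finite_index :: "nat \<Rightarrow> (nat \<Rightarrow> int) list \<Rightarrow> bool" where
  "finite_index n xs \<longleftrightarrow> (\<exists>R. finite R \<and> (\<forall>v\<in>lat n. \<exists>r\<in>R. (\<lambda>i. v i - r i) \<in> int_span xs))"

definition mobius :: "'a set \<Rightarrow> ('a \<Rightarrow> 'a \<Rightarrow> bool) \<Rightarrow> 'a \<Rightarrow> 'a \<Rightarrow> int" where
  "mobius P le = (THE f. \<forall>x y. f x y =
      (if x \<in> P \<and> y \<in> P then
         (if x = y then 1
          else if le x y then - (\<Sum>z\<in>{z\<in>P. le x z \<and> le z y \<and> z \<noteq> y}. f x z)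
          else 0)
       else 0))"

end

theory Submission
  imports Defs
begin



definition mstep :: "'a set \<Rightarrow> ('a\<Rightarrow>'a\<Rightarrow>bool) \<Rightarrow> ('a\<Rightarrow>'a\<Rightarrow>int) \<Rightarrow> 'a \<Rightarrow> 'a \<Rightarrow> int" where
 "mstep P le f x y = (if x \<in> P \<and> y \<in> P then
         (if x = y then 1
          else if le x y then - (\<Sum>z\<in>{z\<in>P. le x z \<and> le z y \<and> z \<noteq> y}. f x z)
          else 0)
       else 0)"

lemma mobius_alt: "mobius P le = (THE f. \<forall>x y. f x y = mstep P le f x y)"
  unfolding mobius_def mstep_def by simp

lemma mstep_cong:
  assumes "x \<in> P \<Longrightarrow> y \<in> P \<Longrightarrow> le x y \<Longrightarrow> x \<noteq> y \<Longrightarrow> \<forall>z\<in>{z\<in>P. le x z \<and> le z y \<and> z \<noteq> y}. f x z = g x z"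
  shows "mstep P le f x y = mstep P le g x y"
  unfolding mstep_def using assms by (auto intro!: sum.cong)

fun mapprox where
  "mapprox P le 0 = (\<lambda>x y. 0)"
| "mapprox P le (Suc k) = mstep P le (mapprox P le k)"

locale mposet =
  fixes P :: "'a set" and le :: "'a \<Rightarrow> 'a \<Rightarrow> bool"
  assumes mrefl: "\<And>x. x \<in> P \<Longrightarrow> le x x"
   and mantisym: "\<And>x y. x\<in>P \<Longrightarrow> y\<in>P \<Longrightarrow> le x y \<Longrightarrow> le y x \<Longrightarrow> x = y"
   and mtrans: "\<And>x y z. x\<in>P \<Longrightarrow> y\<in>P \<Longrightarrow> z\<in>P \<Longrightarrow> le x y \<Longrightarrow> le y z \<Longrightarrow> le x z"
   and mfin: "\<And>x y. x\<in>P \<Longrightarrow> y\<in>P \<Longrightarrow> finite {z\<in>P. le x z \<and> le z y}"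
begin

definition iv where "iv x y = {z\<in>P. le x z \<and> le z y}"

lemma card_less:
  assumes "x \<in> P" "y \<in> P" "le x y" "z \<in> {z\<in>P. le x z \<and> le z y \<and> z \<noteq> y}"
  shows "card (iv x z) < card (iv x y)"
proof (rule psubset_card_mono)
  show "finite (iv x y)" using mfin assms unfolding iv_def by blast
  have "iv x z \<subseteq> iv x y" using assms mtrans unfolding iv_def by blast
  moreover have "y \<in> iv x y" using assms mrefl unfolding iv_def by blast
  moreover have "y \<notin> iv x z" using assms mantisym unfolding iv_def by blast
  ultimately show "iv x z \<subset> iv x y" by blast
qed

lemma uniq:
  assumes f: "\<forall>x y. f x y = mstep P le f x y" and g: "\<forall>x y. g x y = mstep P le g x y"
  shows "f x y = g x y"
proof (induction "card (iv x y)" arbitrary: y rule: less_induct)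
  case less
  have "mstep P le f x y = mstep P le g x y"
    by (rule mstep_cong) (use less card_less in blast)
  then show ?case using f g by metis
qed

lemma stable: "\<forall>x y. card (iv x y) < k \<longrightarrow> mapprox P le k x y = mapprox P le (Suc k) x y"
proof (induction k)
  case 0 then show ?case by simp
next
  case (Suc k)
  show ?case
  proof (intro allI impI)
    fix x y assume c: "card (iv x y) < Suc k"
    have "mstep P le (mapprox P le k) x y = mstep P le (mapprox P le (Suc k)) x y"
    proof (rule mstep_cong)
      assume "x \<in> P" "y \<in> P" "le x y" "x \<noteq> y"
      then show "\<forall>z\<in>{z \<in> P. le x z \<and> le z y \<and> z \<noteq> y}. mapprox P le k x z = mapprox P le (Suc k) x z"
        using Suc.IH card_less c by (meson less_Suc_eq_le order_less_le_trans)
    qed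
    then show "mapprox P le (Suc k) x y = mapprox P le (Suc (Suc k)) x y" by simp
  qed
qed

lemma stable2: "card (iv x y) < k \<Longrightarrow> mapprox P le k x y = mapprox P le (Suc (card (iv x y))) x y"
proof (induction k)
  case 0 then show ?case by simp
next
  case (Suc k)
  show ?case
  proof (cases "card (iv x y) < k")
    case True
    then show ?thesis using Suc stable by metis
  next
    case False
    then have "k = card (iv x y)" using Suc by simp
    then show ?thesis by simp
  qed
qed

lemma ex: "\<exists>f. \<forall>x y. f x y = mstep P le f x y"
proof
  define f where "f x y = mapprox P le (Suc (card (iv x y))) x y" for x y
  show "\<forall>x y. f x y = mstep P le f x y"
  proof (intro allI)
    fix x y
    have "f x y = mstep P le (mapprox P le (card (iv x y))) x y" by (simp add: f_def)
    also have "\<dots> = mstep P le f x y"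
    proof (rule mstep_cong)
      assume "x \<in> P" "y \<in> P" "le x y" "x \<noteq> y"
      then show "\<forall>z\<in>{z \<in> P. le x z \<and> le z y \<and> z \<noteq> y}. mapprox P le (card (iv x y)) x z = f x z"
        using card_less stable2 unfolding f_def by blast
    qed
    finally show "f x y = mstep P le f x y" .
  qed
qed

lemma mobius_eq:
  assumes "\<forall>x y. f x y = mstep P le f x y"
  shows "mobius P le = f"
proof -
  from ex obtain g where g: "\<forall>x y. g x y = mstep P le g x y" by blast
  have "\<exists>!f. \<forall>x y. f x y = mstep P le f x y"
  proof (rule ex1I[of _ g])
    show "\<forall>x y. g x y = mstep P le g x y" by (rule g)
    fix h assume h: "\<forall>x y. h x y = mstep P le h x y"
    show "h = g"
    proof (intro ext)
      fix x y show "h x y = g x y" by (rule uniq[OF h g])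
    qed
  qed
  then show ?thesis unfolding mobius_alt by (rule the1_equality[where P="\<lambda>f. \<forall>x y. f x y = mstep P le f x y", OF _ assms])
qed

end

lemma alt_pow: "finite A \<Longrightarrow> (\<Sum>I\<in>Pow A. (-1::int) ^ card I) = (if A = {} then 1 else 0)"
proof (induction A rule: finite_induct)
  case empty then show ?case by simp
next
  case (insert a A)
  have "Pow (insert a A) = Pow A \<union> insert a ` Pow A" by (rule Pow_insert)
  moreover have "Pow A \<inter> insert a ` Pow A = {}" using insert by auto
  moreover have "inj_on (insert a) (Pow A)" using insert by (auto simp: inj_on_def)
  ultimately have "(\<Sum>I\<in>Pow (insert a A). (-1::int) ^ card I) = (\<Sum>I\<in>Pow A. (-1::int) ^ card I) + (\<Sum>I\<in>Pow A. (-1::int) ^ card (insert a I))"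
    using insert by (simp add: sum.union_disjoint sum.reindex)
  also have "(\<Sum>I\<in>Pow A. (-1::int) ^ card (insert a I)) = - (\<Sum>I\<in>Pow A. (-1::int) ^ card I)"
    unfolding sum_negf[symmetric]
  proof (rule sum.cong[OF refl])
    fix I assume "I \<in> Pow A"
    then have "finite I" "a \<notin> I" using insert finite_subset by auto
    then show "(-1::int) ^ card (insert a I) = - ((-1::int) ^ card I)" by simp
  qed
  finally show ?case by simp
qed



lemma notconst:
  fixes t0 :: "(nat \<Rightarrow> int) \<times> 't::ab_group_add \<Rightarrow> complex"
  assumes t0: "t0 \<in> chargrp n" and v: "v \<in> lat n" "v \<noteq> (\<lambda>_. 0)"
  shows "\<not> (connected_component_set (chargrp n) t0 \<subseteq> {t. t (v, 0) = 1})"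
proof
  assume sub: "connected_component_set (chargrp n) t0 \<subseteq> {t. t (v, 0) = 1}"
  obtain k where k: "v k \<noteq> 0" using v by auto
  define c where "c = real_of_int (v k)"
  define p where "p s = (\<lambda>z. t0 z * exp (\<i> * complex_of_real (2 * pi * s * c * real_of_int (fst z k))))" for s :: real
  have pin: "p s \<in> chargrp n" for s
  proof -
    have "p s (\<lambda>i. a i + b i, g + h) = p s (a, g) * p s (b, h)" if "a \<in> lat n" "b \<in> lat n" for a b g h
    proof -
      have "t0 (\<lambda>i. a i + b i, g + h) = t0 (a, g) * t0 (b, h)" using t0 that unfolding chargrp_def by blast
      moreover have "exp (\<i> * complex_of_real (2 * pi * s * c * real_of_int (a k + b k)))
         = exp (\<i> * complex_of_real (2 * pi * s * c * real_of_int (a k))) * exp (\<i> * complex_of_real (2 * pi * s * c * real_of_int (b k)))"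
        by (simp add: exp_add[symmetric] distrib_left algebra_simps)
      ultimately show ?thesis unfolding p_def by simp
    qed
    then show ?thesis using t0 unfolding chargrp_def p_def by auto
  qed
  have cont: "continuous_on {0..1} p"
    unfolding p_def by (intro continuous_on_coordinatewise_then_product continuous_intros)
  have "p ` {0..1} \<subseteq> connected_component_set (chargrp n) t0"
  proof (rule connected_component_maximal)
    show "t0 \<in> p ` {0..1}" by (rule image_eqI[of _ _ 0]) (auto simp: p_def)
    show "connected (p ` {0..1})" using cont by (intro connected_continuous_image) auto
    show "p ` {0..1} \<subseteq> chargrp n" using pin by auto
  qed
  have a1: "1 \<le> \<bar>v k\<bar>" using k by arith
  have "1*1 \<le> \<bar>v k\<bar> * \<bar>v k\<bar>" by (rule mult_mono) (use a1 in auto)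
  then have "1 \<le> v k * v k" by (simp add: abs_mult_self_eq)
  then have cpos: "c * c \<ge> 1" unfolding c_def by (metis of_int_1_le_iff of_int_mult)
  define s1 where "s1 = 1 / (2 * (c * c))"
  have s1: "s1 \<in> {0..1}" using cpos unfolding s1_def by (auto simp: field_simps)
  have hpi: "2 * pi * s1 * c * c = pi" using cpos unfolding s1_def by (auto simp: field_simps)
  have e: "exp (\<i> * complex_of_real (2 * pi * s1 * c * c)) = -1"
    unfolding hpi by (rule exp_pi_i')
  have "p s1 (v, 0) = t0 (v, 0) * exp (\<i> * complex_of_real (2 * pi * s1 * c * c))"
    unfolding p_def c_def by simp
  then have "p s1 (v, 0) = - t0 (v, 0)" using e by simp
  moreover have "p s1 (v, 0) = 1" using sub \<open>p ` {0..1} \<subseteq> _\<close> imageI[OF s1, of p] by blast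
  moreover have "t0 (v, 0) = 1" using sub connected_component_refl t0 by fastforce
  ultimately show False by simp
qed



lemma layer_H_sub: "layer_H n xs I \<subseteq> chargrp n"
  unfolding layer_H_def by auto

lemma layer_H_empty: "layer_H n xs {} = chargrp n"
  unfolding layer_H_def by auto

lemma layer_H_iff:
  assumes "y \<subseteq> chargrp n"
  shows "y \<subseteq> layer_H n xs I \<longleftrightarrow> (\<forall>i\<in>I. y \<subseteq> layer_H n xs {i})"
  using assms unfolding layer_H_def by auto

lemma layers_props:
  assumes "L \<in> layers n xs"
  shows "L \<subseteq> chargrp n" "L \<noteq> {}" "connected L"
proof -
  obtain I where I: "L \<in> components (layer_H n xs I)" using assms unfolding layers_def by blast
  show "L \<subseteq> chargrp n" using in_components_subset[OF I] layer_H_sub by blast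
  show "L \<noteq> {}" using in_components_nonempty[OF I] .
  show "connected L" using in_components_connected[OF I] .
qed

lemma fin_above:
  fixes y :: "((nat \<Rightarrow> int) \<times> 't::ab_group_add \<Rightarrow> complex) set"
  assumes "y \<in> layers n xs"
  shows "finite {z \<in> layers n xs. y \<subseteq> z}"
proof -
  obtain q where q: "q \<in> y" using layers_props(2)[OF assms] by blast
  have "{z \<in> layers n xs. y \<subseteq> z} \<subseteq> (\<lambda>I. connected_component_set (layer_H n xs I) q) ` Pow {..<length xs}"
  proof
    fix z assume "z \<in> {z \<in> layers n xs. y \<subseteq> z}"
    then obtain I where I: "I \<subseteq> {..<length xs}" "z \<in> components (layer_H n xs I)" "q \<in> z"
      using q unfolding layers_def by blast
    then have "z = connected_component_set (layer_H n xs I) q"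
      by (metis components_iff connected_component_eq)
    then show "z \<in> (\<lambda>I. connected_component_set (layer_H n xs I) q) ` Pow {..<length xs}"
      using I by blast
  qed
  then show ?thesis by (rule finite_subset) auto
qed

lemma poset: "mposet (layers n xs :: ((nat \<Rightarrow> int) \<times> 't::ab_group_add \<Rightarrow> complex) set set) (\<lambda>L M. M \<subseteq> L)"
proof
  fix x y :: "((nat \<Rightarrow> int) \<times> 't \<Rightarrow> complex) set" assume "x \<in> layers n xs" "y \<in> layers n xs"
  then show "finite {z \<in> layers n xs. z \<subseteq> x \<and> y \<subseteq> z}"
    using fin_above[of y n xs] by (rule_tac finite_subset[of _ "{z \<in> layers n xs. y \<subseteq> z}"]) auto
qed auto

definition FF :: "nat \<Rightarrow> (nat \<Rightarrow> int) list \<Rightarrow> ((nat \<Rightarrow> int) \<times> 't::ab_group_add \<Rightarrow> complex) set \<Rightarrow> int" where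
  "FF n xs L = (\<Sum>I\<in>{I. I \<subseteq> {..<length xs} \<and> L \<in> components (layer_H n xs I)}. (-1::int) ^ card I)"

lemma sumF:
  fixes x y :: "((nat \<Rightarrow> int) \<times> 't::ab_group_add \<Rightarrow> complex) set"
  assumes xs: "\<forall>x\<in>set xs. x \<in> lat n \<and> x \<noteq> (\<lambda>_. 0)"
    and p0: "p0 \<in> chargrp n" and xdef: "x = connected_component_set (chargrp n) p0"
    and y: "y \<in> layers n xs" "y \<subseteq> x"
  shows "(\<Sum>z\<in>{z \<in> layers n xs. z \<subseteq> x \<and> y \<subseteq> z}. FF n xs z) = (if y = x then 1 else 0)"
proof -
  define Z where "Z = {z \<in> layers n xs. z \<subseteq> x \<and> y \<subseteq> z}"
  define D where "D (z :: ((nat \<Rightarrow> int) \<times> 't \<Rightarrow> complex) set) = {I. I \<subseteq> {..<length xs} \<and> z \<in> components (layer_H n xs I)}" for z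
  define J where "J = {i. i < length xs \<and> y \<subseteq> layer_H n xs {i}}"
  have yc: "y \<subseteq> chargrp n" "y \<noteq> {}" "connected y" using layers_props[OF y(1)] by auto
  have finZ: "finite Z" unfolding Z_def
    by (rule finite_subset[OF _ fin_above[OF y(1)]]) auto
  have finD: "finite (D z)" for z unfolding D_def
    by (rule finite_subset[of _ "Pow {..<length xs}"]) auto
  have disj: "\<forall>A\<in>Z. \<forall>B\<in>Z. A \<noteq> B \<longrightarrow> D A \<inter> D B = {}"
  proof (intro ballI impI)
    fix A B assume AB: "A \<in> Z" "B \<in> Z" "A \<noteq> B"
    show "D A \<inter> D B = {}"
    proof (rule ccontr)
      assume "D A \<inter> D B \<noteq> {}"
      then obtain I where "A \<in> components (layer_H n xs I)" "B \<in> components (layer_H n xs I)"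
        unfolding D_def by blast
      moreover have "A \<inter> B \<noteq> {}" using AB yc unfolding Z_def by blast
      ultimately show False using AB(3) components_eq[of A _ B] by blast
    qed
  qed
  have U: "\<Union>(D ` Z) = Pow J"
  proof
    show "\<Union>(D ` Z) \<subseteq> Pow J"
    proof
      fix I assume "I \<in> \<Union>(D ` Z)"
      then obtain z where z: "z \<in> Z" "I \<subseteq> {..<length xs}" "z \<in> components (layer_H n xs I)"
        unfolding D_def by blast
      then have "y \<subseteq> layer_H n xs I" using in_components_subset unfolding Z_def by blast
      then have "\<forall>i\<in>I. y \<subseteq> layer_H n xs {i}" using layer_H_iff[OF yc(1)] by blast
      then show "I \<in> Pow J" using z(2) unfolding J_def by blast
    qed
    show "Pow J \<subseteq> \<Union>(D ` Z)"
    proof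
      fix I assume "I \<in> Pow J"
      then have I1: "I \<subseteq> {..<length xs}" and "\<forall>i\<in>I. y \<subseteq> layer_H n xs {i}"
        unfolding J_def by blast+
      then have I: "I \<subseteq> {..<length xs}" "y \<subseteq> layer_H n xs I"
        using layer_H_iff[OF yc(1)] by blast+
      obtain q where q: "q \<in> y" using yc by blast
      define z where "z = (connected_component_set (layer_H n xs I) q :: ((nat \<Rightarrow> int) \<times> 't \<Rightarrow> complex) set)"
      have zc: "z \<in> components (layer_H n xs I)" unfolding z_def components_iff using q I by blast
      then have zl: "z \<in> layers n xs" using I unfolding layers_def by blast
      have yz: "y \<subseteq> z" unfolding z_def using q I yc by (intro connected_component_maximal) auto
      have "q \<in> connected_component_set (chargrp n) p0" using q y(2) xdef by blast
      then have "connected_component_set (chargrp n) q = connected_component_set (chargrp n) p0"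
        by (rule connected_component_eq)
      then have "connected_component_set (chargrp n) q = x" using xdef by simp
      moreover have "z \<subseteq> connected_component_set (chargrp n) q"
      proof (rule connected_component_maximal)
        show "q \<in> z" using q yz by blast
        show "connected z" by (rule in_components_connected[OF zc])
        show "z \<subseteq> chargrp n" using in_components_subset[OF zc] layer_H_sub by blast
      qed
      ultimately have "z \<in> Z" using zl yz unfolding Z_def by blast
      then show "I \<in> \<Union>(D ` Z)" using zc I unfolding D_def by blast
    qed
  qed
  have "(\<Sum>z\<in>Z. FF n xs z) = (\<Sum>z\<in>Z. sum (\<lambda>I. (-1::int) ^ card I) (D z))"
    unfolding FF_def D_def by simp
  also have "\<dots> = sum (\<lambda>I. (-1::int) ^ card I) (\<Union>(D ` Z))"
    by (rule sum.UNION_disjoint[symmetric]) (use finZ finD disj in auto)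
  also have "\<dots> = (if J = {} then 1 else 0)"
    unfolding U by (rule alt_pow) (auto simp: J_def)
  also have "(J = {}) = (y = x)"
  proof
    assume "J = {}"
    obtain I where I: "I \<subseteq> {..<length xs}" "y \<in> components (layer_H n xs I)"
      using y(1) unfolding layers_def by blast
    then have "y \<subseteq> layer_H n xs I" using in_components_subset by blast
    then have "\<forall>i\<in>I. y \<subseteq> layer_H n xs {i}" using layer_H_iff[OF yc(1)] by blast
    then have "I \<subseteq> J" using I(1) unfolding J_def by blast
    then have "I = {}" using \<open>J = {}\<close> by blast
    then have "y \<in> components (chargrp n)" using I layer_H_empty by metis
    moreover have "x \<in> components (chargrp n)" unfolding xdef components_iff using p0 by blast
    moreover have "y \<inter> x \<noteq> {}" using y(2) yc(2) by blast
    ultimately show "y = x" using components_eq[of y "chargrp n" x] by blast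
  next
    assume yx: "y = x"
    show "J = {}"
    proof (rule ccontr)
      assume "J \<noteq> {}"
      then obtain i where i: "i < length xs" "x \<subseteq> layer_H n xs {i}" unfolding J_def yx by blast
      then have "x \<subseteq> {t. t (xs ! i, 0) = 1}" unfolding layer_H_def by auto
      moreover have "xs ! i \<in> lat n" "xs ! i \<noteq> (\<lambda>_. 0)" using xs i(1) nth_mem by blast+
      ultimately show False using notconst[OF p0] xdef by blast
    qed
  qed
  finally show ?thesis unfolding Z_def .
qed

theorem lemma5p5:
  fixes n :: nat and xs :: "(nat \<Rightarrow> int) list"
    and C :: "((nat \<Rightarrow> int) \<times> 't::{ab_group_add,finite} \<Rightarrow> complex) set"
  assumes "\<forall>x\<in>set xs. x \<in> lat n \<and> x \<noteq> (\<lambda>_. 0)"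
    and "finite_index n xs"
    and "C \<in> layers n xs"
  shows "mobius (layers n xs) (\<lambda>L M. M \<subseteq> L)
           (connected_component_set (chargrp n) (SOME t. t \<in> C)) C
         = (\<Sum>I\<in>{I. I \<subseteq> {..<length xs} \<and> C \<in> components (layer_H n xs I)}. (-1::int) ^ card I)"
proof -
  interpret mposet "layers n xs :: ((nat \<Rightarrow> int) \<times> 't \<Rightarrow> complex) set set" "\<lambda>L M. M \<subseteq> L" by (rule poset)
  define c0 where "c0 = (SOME t. t \<in> C)"
  have Cp: "C \<subseteq> chargrp n" "C \<noteq> {}" "connected C" using layers_props[OF assms(3)] by auto
  have c0: "c0 \<in> C" unfolding c0_def using Cp(2) by (simp add: some_in_eq)
  define x where "x = connected_component_set (chargrp n) c0"
  have p0: "c0 \<in> chargrp n" using c0 Cp by blast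
  have xP: "x \<in> layers n xs"
  proof -
    have "x \<in> components (layer_H n xs {})" unfolding x_def layer_H_empty components_iff using p0 by blast
    then show ?thesis unfolding layers_def by blast
  qed
  obtain f :: "((nat \<Rightarrow> int) \<times> 't \<Rightarrow> complex) set \<Rightarrow> ((nat \<Rightarrow> int) \<times> 't \<Rightarrow> complex) set \<Rightarrow> int" where f: "\<forall>x y. f x y = mstep (layers n xs) (\<lambda>L M. M \<subseteq> L) f x y" using ex by blast
  have mf: "mobius (layers n xs) (\<lambda>L M. M \<subseteq> L) = f" by (rule mobius_eq[OF f])
  have main: "y \<in> layers n xs \<Longrightarrow> y \<subseteq> x \<Longrightarrow> f x y = FF n xs y" for y
  proof (induction "card (iv x y)" arbitrary: y rule: less_induct)
    case less
    have fy: "f x y = mstep (layers n xs) (\<lambda>L M. M \<subseteq> L) f x y" using f by blast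
    have sF: "(\<Sum>z\<in>{z \<in> layers n xs. z \<subseteq> x \<and> y \<subseteq> z}. FF n xs z) = (if y = x then 1 else 0)"
      by (rule sumF[OF assms(1) p0 x_def less.prems])
    show ?case
    proof (cases "y = x")
      case True
      have "{z \<in> layers n xs. z \<subseteq> x \<and> y \<subseteq> z} = {x}" using True xP by auto
      then have "FF n xs y = 1" using sF True by simp
      moreover have "f x y = 1" using fy True xP unfolding mstep_def by simp
      ultimately show ?thesis by simp
    next
      case False
      define Z' where "Z' = {z \<in> layers n xs. z \<subseteq> x \<and> y \<subseteq> z \<and> z \<noteq> y}"
      have "f x y = - (\<Sum>z\<in>Z'. f x z)" using fy False less.prems xP unfolding mstep_def Z'_def by simp
      also have "(\<Sum>z\<in>Z'. f x z) = (\<Sum>z\<in>Z'. FF n xs z)"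
      proof (rule sum.cong[OF refl])
        fix z assume z: "z \<in> Z'"
        have "card (iv x z) < card (iv x y)"
          by (rule card_less) (use xP less.prems z in \<open>auto simp: Z'_def\<close>)
        then show "f x z = FF n xs z" using less.hyps z unfolding Z'_def by blast
      qed
      have "{z \<in> layers n xs. z \<subseteq> x \<and> y \<subseteq> z} = insert y Z'" using less.prems unfolding Z'_def by auto
      have finZ': "finite Z'" unfolding Z'_def
        by (rule finite_subset[OF _ fin_above[OF less.prems(1)]]) auto
      have "y \<notin> Z'" unfolding Z'_def by blast
      have "FF n xs y + (\<Sum>z\<in>Z'. FF n xs z) = 0"
        using sF False \<open>{z \<in> layers n xs. z \<subseteq> x \<and> y \<subseteq> z} = insert y Z'\<close> finZ' \<open>y \<notin> Z'\<close> by simp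
      then show ?thesis using \<open>f x y = - (\<Sum>z\<in>Z'. f x z)\<close> \<open>(\<Sum>z\<in>Z'. f x z) = (\<Sum>z\<in>Z'. FF n xs z)\<close> by simp
    qed
  qed
  have "C \<subseteq> x" unfolding x_def using c0 Cp by (intro connected_component_maximal) auto
  then have "f x C = FF n xs C" using main assms(3) by blast
  then show ?thesis unfolding mf FF_def x_def[symmetric] c0_def[symmetric] .
qed

end
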